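(* Let $\langle \Lambda, \mathcal{S}\rangle$ be a measurable space and let $P_{00}, P_{0+}, P_{+0}, P_{++}$ be four probability measures on it that satisfy the Preparation Uninformativeness Condition, i.e. there is a measure $Q$ on $\langle \Lambda,\mathcal{S}\rangle$ dominating all four, with densities $\mu_{xy} = dP_{xy}/dQ$ ($x,y\in\{0,+\}$) such that for all $\lambda \in \Lambda$, $$\mu_{00}(\lambda)\,\mu_{++}(\lambda) = \mu_{0+}(\lambda)\,\mu_{+0}(\lambda).$$ Suppose there is an experiment $E$ with finite outcome set $K$, given by measurable functions $p_k:\Lambda\to[0,1]$ ($k\in K$) with $\sum_{k\in K} p_k(\lambda)=1$ for all $\lambda$, such that every outcome $k\in K$ is precluded by some $P_{xy}$, i.e. for each $k$ there are $x,y\in\{0,+\}$ with $\int_\Lambda p_k\, dP_{xy} = 0$. Then $P_{00}$ and $P_{++}$ have null overlap, and $P_{0+}$ and $P_{+0}$ have null overlap; that is, $\int_\Lambda \min(\mu_{00},\mu_{++})\,dQ = 0$ and $\int_\Lambda \min(\mu_{0+},\mu_{+0})\,dQ = 0$ (equivalently, the total variation distances $\delta(P_{00},P_{++})$ and $\delta(P_{0+},P_{+0})$ equal $1$).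
   Context: The total variation (statistical) distance between probability measures $P,Q'$ with densities $p,q$ with respect to a common dominating measure $\nu$ is $\delta(P,Q')=\sup_{A\in\mathcal{S}}|P(A)-Q'(A)| = 1-\int_\Lambda \min(p,q)\,d\nu$; the classical overlap is $\omega(P,Q')=1-\delta(P,Q')$, and "null overlap" means $\omega=0$. *)

theory Defs
  imports "HOL-Probability.Probability"
begin

end

theory Submission
  imports Defs
begin

theorem theorem1:
  fixes M :: "'a measure"
    and P :: "bool \<Rightarrow> bool \<Rightarrow> 'a measure"
    and Q :: "'a measure"
    and \<mu> :: "bool \<Rightarrow> bool \<Rightarrow> 'a \<Rightarrow> real"
    and K :: "'k set"
    and p :: "'k \<Rightarrow> 'a \<Rightarrow> real"
  assumes P_prob: "\<And>x y. prob_space (P x y)"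
    and P_sets: "\<And>x y. sets (P x y) = sets M"
    and Q_sets: "sets Q = sets M"
    and \<mu>_meas: "\<And>x y. \<mu> x y \<in> borel_measurable M"
    and \<mu>_nonneg: "\<And>x y l. l \<in> space M \<Longrightarrow> 0 \<le> \<mu> x y l"
    and P_density: "\<And>x y. P x y = density Q (\<lambda>l. ennreal (\<mu> x y l))"
    and PUC: "\<And>l. l \<in> space M \<Longrightarrow>
               \<mu> False False l * \<mu> True True l = \<mu> False True l * \<mu> True False l"
    and K_fin: "finite K"
    and p_meas: "\<And>k. k \<in> K \<Longrightarrow> p k \<in> borel_measurable M"
    and p_range: "\<And>k l. k \<in> K \<Longrightarrow> l \<in> space M \<Longrightarrow> 0 \<le> p k l \<and> p k l \<le> 1"
    and p_sum: "\<And>l. l \<in> space M \<Longrightarrow> (\<Sum>k\<in>K. p k l) = 1"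
    and precluded: "\<And>k. k \<in> K \<Longrightarrow> \<exists>x y. (\<integral>l. p k l \<partial>(P x y)) = 0"
  shows "(\<integral>\<^sup>+ l. ennreal (min (\<mu> False False l) (\<mu> True True l)) \<partial>Q) = 0
         \<and> (\<integral>\<^sup>+ l. ennreal (min (\<mu> False True l) (\<mu> True False l)) \<partial>Q) = 0"
proof -
  have spQ: "space Q = space M" using Q_sets by (rule sets_eq_imp_space_eq)
  have mQ: "\<And>f. f \<in> borel_measurable M \<Longrightarrow> f \<in> borel_measurable Q"
    using Q_sets by (simp add: measurable_def spQ)
  have AEk: "AE l in Q. \<exists>x y. 0 < \<mu> x y l \<longrightarrow> p k l = 0" if kK: "k \<in> K" for k
  proof -
    obtain x y where xy: "(\<integral>l. p k l \<partial>(P x y)) = 0" using precluded[OF kK] by blast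
    interpret ps: prob_space "P x y" by (rule P_prob)
    have spP: "space (P x y) = space M" using P_sets by (rule sets_eq_imp_space_eq)
    have pm: "p k \<in> borel_measurable (P x y)"
      using p_meas[OF kK] P_sets[of x y] by (simp add: measurable_def spP)
    have int: "integrable (P x y) (p k)"
    proof (rule ps.integrable_const_bound[where B=1])
      show "AE l in P x y. norm (p k l) \<le> 1" using p_range[OF kK] by (auto simp: spP)
    qed (use pm in auto)
    have "AE l in P x y. p k l = 0"
    proof -
      have "AE l in P x y. 0 \<le> p k l" using p_range[OF kK] by (auto simp: spP)
      then show ?thesis using integral_nonneg_eq_0_iff_AE[OF int] xy by simp
    qed
    then have "AE l in density Q (\<lambda>l. ennreal (\<mu> x y l)). p k l = 0"
      by (metis P_density)
    note aed = this
    have em: "(\<lambda>l. ennreal (\<mu> x y l)) \<in> borel_measurable Q"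
      by (intro mQ measurable_compose[OF \<mu>_meas[of x y] measurable_ennreal])
    have "AE l in Q. 0 < ennreal (\<mu> x y l) \<longrightarrow> p k l = 0"
      using aed unfolding AE_density[OF em] .
    then show ?thesis by (rule AE_mp) (auto intro!: exI[of _ x] exI[of _ y])
  qed
  have all: "AE l in Q. \<forall>k\<in>K. \<exists>x y. 0 < \<mu> x y l \<longrightarrow> p k l = 0"
    using AEk K_fin by (subst AE_finite_all) blast+
  have key: "\<not> (\<forall>x y. 0 < \<mu> x y l)" if l: "l \<in> space M" and h: "\<forall>k\<in>K. \<exists>x y. 0 < \<mu> x y l \<longrightarrow> p k l = 0" for l
  proof
    assume "\<forall>x y. 0 < \<mu> x y l"
    then have "\<forall>k\<in>K. p k l = 0" using h by blast
    then have "(\<Sum>k\<in>K. p k l) = 0" by simp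
    with p_sum[OF l] show False by simp
  qed
  have pos: "0 < a" if "0 \<le> a" "a * b = c" "0 < c" for a b c :: real
    using that by (cases "a = 0") auto
  have AE1: "AE l in Q. min (\<mu> False False l) (\<mu> True True l) = 0"
    using all
  proof (rule AE_mp, intro AE_I2 impI)
    fix l assume l: "l \<in> space Q" and h: "\<forall>k\<in>K. \<exists>x y. 0 < \<mu> x y l \<longrightarrow> p k l = 0"
    have lM: "l \<in> space M" using l spQ by simp
    show "min (\<mu> False False l) (\<mu> True True l) = 0"
    proof (rule ccontr)
      assume "min (\<mu> False False l) (\<mu> True True l) \<noteq> 0"
      then have a: "0 < \<mu> False False l" "0 < \<mu> True True l"
        using \<mu>_nonneg[OF lM, of False False] \<mu>_nonneg[OF lM, of True True]
        by (smt (verit))+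
      then have c: "0 < \<mu> False True l * \<mu> True False l" using PUC[OF lM] by (metis mult_pos_pos)
      have "0 < \<mu> False True l" using pos[OF \<mu>_nonneg[OF lM] refl c] by simp
      moreover have "0 < \<mu> True False l" using pos[OF \<mu>_nonneg[OF lM], of True False "\<mu> False True l"] c by (simp add: mult.commute)
      ultimately have b: "\<forall>x y. 0 < \<mu> x y l" using a
        by (intro allI, case_tac x; case_tac y) simp_all
      then show False using key[OF lM h] by blast
    qed
  qed
  have AE2: "AE l in Q. min (\<mu> False True l) (\<mu> True False l) = 0"
    using all
  proof (rule AE_mp, intro AE_I2 impI)
    fix l assume l: "l \<in> space Q" and h: "\<forall>k\<in>K. \<exists>x y. 0 < \<mu> x y l \<longrightarrow> p k l = 0"
    have lM: "l \<in> space M" using l spQ by simp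
    show "min (\<mu> False True l) (\<mu> True False l) = 0"
    proof (rule ccontr)
      assume "min (\<mu> False True l) (\<mu> True False l) \<noteq> 0"
      then have a: "0 < \<mu> False True l" "0 < \<mu> True False l"
        using \<mu>_nonneg[OF lM, of False True] \<mu>_nonneg[OF lM, of True False]
        by (smt (verit))+
      then have c: "0 < \<mu> False False l * \<mu> True True l" using PUC[OF lM] by (metis mult_pos_pos)
      have "0 < \<mu> False False l" using pos[OF \<mu>_nonneg[OF lM] refl c] by simp
      moreover have "0 < \<mu> True True l" using pos[OF \<mu>_nonneg[OF lM], of True True "\<mu> False False l"] c by (simp add: mult.commute)
      ultimately have b: "\<forall>x y. 0 < \<mu> x y l" using a
        by (intro allI, case_tac x; case_tac y) simp_all
      then show False using key[OF lM h] by blast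
    qed
  qed
  show ?thesis
  proof
    show "(\<integral>\<^sup>+ l. ennreal (min (\<mu> False False l) (\<mu> True True l)) \<partial>Q) = 0"
    proof -
      have "AE l in Q. ennreal (min (\<mu> False False l) (\<mu> True True l)) = 0"
        using AE1 by (rule AE_mp) simp
      then have "(\<integral>\<^sup>+ l. ennreal (min (\<mu> False False l) (\<mu> True True l)) \<partial>Q) = (\<integral>\<^sup>+ l. 0 \<partial>Q)"
        by (rule nn_integral_cong_AE)
      then show ?thesis by simp
    qed
    show "(\<integral>\<^sup>+ l. ennreal (min (\<mu> False True l) (\<mu> True False l)) \<partial>Q) = 0"
    proof -
      have "AE l in Q. ennreal (min (\<mu> False True l) (\<mu> True False l)) = 0"
        using AE2 by (rule AE_mp) simp
      then have "(\<integral>\<^sup>+ l. ennreal (min (\<mu> False True l) (\<mu> True False l)) \<partial>Q) = (\<integral>\<^sup>+ l. 0 \<partial>Q)"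
        by (rule nn_integral_cong_AE)
      then show ?thesis by simp
    qed
  qed
qed

end
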